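(* Let $a, b, n$ be positive integers with $b>1$, $n>1$, and suppose $S_a(b,n)$ is a numerical semigroup (equivalently $\gcd(r_b(n),a)=1$). Then $\{a_1, \ldots, a_n\}$ is the minimal system of generators of $S_a(b,n)$; in particular the embedding dimension of $S_a(b,n)$ is $n$.
   Context: For an integer $\ell \ge 1$, $r_b(\ell) = \sum_{j=0}^{\ell-1} b^j$, and $r_b(0)=0$. For $i \ge 1$, $a_i := r_b(n) + a\, r_b(i-1)$. $S_a(b,n)$ is the submonoid of $\mathbb{N}$ generated by $\{a_i: i\ge 1\}$. The minimal system of generators of a numerical semigroup is the unique generating set no proper subset of which generates it; the embedding dimension is its cardinality. *)

theory Defs
  imports Main
begin

definition repunit :: "nat \<Rightarrow> nat \<Rightarrow> nat" where
  "repunit b l = (\<Sum>j<l. b ^ j)"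

definition agen :: "nat \<Rightarrow> nat \<Rightarrow> nat \<Rightarrow> nat \<Rightarrow> nat" where
  "agen a b n i = repunit b n + a * repunit b (i - 1)"

inductive_set monoid_gen :: "nat set \<Rightarrow> nat set" for A :: "nat set" where
  zero: "0 \<in> monoid_gen A"
| add: "x \<in> A \<Longrightarrow> y \<in> monoid_gen A \<Longrightarrow> x + y \<in> monoid_gen A"

definition S_sg :: "nat \<Rightarrow> nat \<Rightarrow> nat \<Rightarrow> nat set" where
  "S_sg a b n = monoid_gen {agen a b n i | i. i \<ge> 1}"

definition numerical_semigroup :: "nat set \<Rightarrow> bool" where
  "numerical_semigroup S \<longleftrightarrow> 0 \<in> S \<and> (\<forall>x\<in>S. \<forall>y\<in>S. x + y \<in> S) \<and> finite (UNIV - S)"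

definition minimal_system :: "nat set \<Rightarrow> nat set \<Rightarrow> bool" where
  "minimal_system S G \<longleftrightarrow> monoid_gen G = S \<and> (\<forall>H. H \<subset> G \<longrightarrow> monoid_gen H \<noteq> S)"

definition embedding_dim :: "nat set \<Rightarrow> nat" where
  "embedding_dim S = card (THE G. minimal_system S G)"

end

theory Submission
  imports Defs
begin

lemma mg_base: "x \<in> A \<Longrightarrow> x \<in> monoid_gen A"
  using monoid_gen.add[of x A 0] monoid_gen.zero by simp

lemma mg_add: "x \<in> monoid_gen A \<Longrightarrow> y \<in> monoid_gen A \<Longrightarrow> x + y \<in> monoid_gen A"
  by (induction x rule: monoid_gen.induct) (auto simp: add.assoc intro: monoid_gen.add)

lemma mg_sub: "A \<subseteq> monoid_gen B \<Longrightarrow> monoid_gen A \<subseteq> monoid_gen B"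
proof
  fix x assume h: "A \<subseteq> monoid_gen B" "x \<in> monoid_gen A"
  from h(2) show "x \<in> monoid_gen B" using h(1)
    by (induction x rule: monoid_gen.induct) (auto intro: monoid_gen.zero mg_add)
qed

lemma mg_mult: "x \<in> monoid_gen A \<Longrightarrow> k * x \<in> monoid_gen A"
  by (induction k) (auto intro: monoid_gen.zero mg_add)

lemma mg_irr:
  "y \<in> monoid_gen G \<Longrightarrow> y \<noteq> 0 \<Longrightarrow>
   (\<forall>u v. u \<in> monoid_gen G \<longrightarrow> v \<in> monoid_gen G \<longrightarrow> u + v = y \<longrightarrow> u = 0 \<or> v = 0) \<Longrightarrow> y \<in> G"
proof (induction y rule: monoid_gen.induct)
  case zero then show ?case by simp
next
  case (add x y)
  have xm: "x \<in> monoid_gen G" using add(1) by (rule mg_base)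
  show ?case
  proof (cases "x = 0")
    case True
    then show ?thesis using add by auto
  next
    case False
    then have "y = 0" using add.prems(2) xm add(2) by blast
    then show ?thesis using add(1) by simp
  qed
qed

lemma repunit_add: "repunit b (m + l) = repunit b m + b ^ m * repunit b l"
  by (induction l) (auto simp: repunit_def power_add algebra_simps)

lemma repunit_0[simp]: "repunit b 0 = 0"
  by (simp add: repunit_def)

lemma repunit_Suc: "repunit b (Suc l) = repunit b l + b ^ l"
  by (simp add: repunit_def)

lemma repunit_strict: "b > 0 \<Longrightarrow> l < m \<Longrightarrow> repunit b l < repunit b m"
proof (induction m)
  case 0 then show ?case by simp
next
  case (Suc m)
  have "b ^ m > 0" using Suc.prems by simp
  then show ?case using Suc by (auto simp: repunit_Suc less_Suc_eq)
qed

lemma repr: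
  assumes "s \<in> S_sg a b n"
  shows "\<exists>c t. s = c * repunit b n + a * t \<and> (c = 0 \<longrightarrow> s = 0)"
  using assms unfolding S_sg_def
proof (induction s rule: monoid_gen.induct)
  case zero then show ?case by (intro exI[of _ 0]) simp
next
  case (add x y)
  then obtain i where x: "x = agen a b n i" by auto
  from add obtain c t where y: "y = c * repunit b n + a * t" by auto
  show ?case
    by (rule exI[of _ "Suc c"], rule exI[of _ "t + repunit b (i - 1)"])
       (simp add: x y agen_def algebra_simps)
qed

theorem theorem6:
  fixes a b n :: nat
  assumes "a > 0" "b > 1" "n > 1"
    and "numerical_semigroup (S_sg a b n)"
  shows "(\<forall>G. minimal_system (S_sg a b n) G \<longleftrightarrow> G = agen a b n ` {1..n})
         \<and> embedding_dim (S_sg a b n) = n"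
proof -
  define S where "S = S_sg a b n"
  define A where "A = agen a b n ` {1..n}"
  define R where "R = repunit b n"
  have Rpos: "R > 0" unfolding R_def using repunit_strict[of b 0 n] assms by (simp add: repunit_def)
  have a1: "agen a b n 1 = R" by (simp add: agen_def R_def repunit_def)
  have AS: "A \<subseteq> S" unfolding A_def S_def S_sg_def by (auto intro!: mg_base)
  have allin: "agen a b n i \<in> monoid_gen A" if "i \<ge> 1" for i
    using that
  proof (induction i rule: less_induct)
    case (less i)
    show ?case
    proof (cases "i \<le> n")
      case True
      then show ?thesis using less.prems by (auto simp: A_def intro!: mg_base)
    next
      case False
      define k where "k = i - n"
      have k: "k \<ge> 1" "k < i" "i = n + k" using False assms(3) unfolding k_def by auto
      have IH: "agen a b n k \<in> monoid_gen A" using less.IH k by simp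
      have one: "agen a b n 1 \<in> monoid_gen A" using assms(3) by (auto simp: A_def intro!: mg_base)
      have eq: "agen a b n i = agen a b n k + (a * b ^ (k - 1)) * agen a b n 1"
      proof -
        have "i - 1 = (k - 1) + n" using k by simp
        then have "repunit b (i - 1) = repunit b (k - 1) + b ^ (k - 1) * R"
          by (simp add: repunit_add R_def)
        then show ?thesis by (simp add: agen_def a1 R_def algebra_simps)
      qed
      show ?thesis unfolding eq by (intro mg_add mg_mult IH one)
    qed
  qed
  have genA: "monoid_gen A = S"
  proof
    show "monoid_gen A \<subseteq> S" using AS unfolding S_def S_sg_def by (intro mg_sub) auto
    show "S \<subseteq> monoid_gen A" unfolding S_def S_sg_def using allin by (intro mg_sub) auto
  qed
  have cop: "coprime R a"
  proof -
    define g where "g = gcd R a"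
    have dv: "g dvd s" if "s \<in> S" for s
    proof -
      obtain c t where "s = c * R + a * t" using repr[of s a b n] \<open>s \<in> S\<close> unfolding R_def S_def by blast
      then show ?thesis by (simp add: g_def)
    qed
    have "finite (UNIV - S)" using assms(4) by (simp add: numerical_semigroup_def S_def)
    then obtain N where N: "\<forall>x \<in> UNIV - S. x < N" using finite_nat_set_iff_bounded by blast
    then have "N \<in> S" "Suc N \<in> S" by (metis Diff_iff UNIV_I less_irrefl, metis Diff_iff UNIV_I lessI less_asym)
    then have "g dvd N" "g dvd Suc N" using dv by auto
    then have "g dvd 1" using dvd_diff_nat[of g "Suc N" N] by simp
    then show ?thesis by (simp add: g_def coprime_iff_gcd_eq_1)
  qed
  have irr: "x \<noteq> 0 \<and> (\<forall>u v. u \<in> S \<longrightarrow> v \<in> S \<longrightarrow> u + v = x \<longrightarrow> u = 0 \<or> v = 0)" if "x \<in> A" for x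
  proof -
    obtain i where i: "1 \<le> i" "i \<le> n" "x = agen a b n i" using \<open>x \<in> A\<close> by (auto simp: A_def)
    define r where "r = repunit b (i - 1)"
    have rlt: "r < R" unfolding r_def R_def using i assms by (intro repunit_strict) auto
    have xe: "x = R + a * r" by (simp add: i agen_def r_def R_def)
    have "\<not> (u \<in> S \<and> v \<in> S \<and> u + v = x \<and> u \<noteq> 0 \<and> v \<noteq> 0)" for u v
    proof
      assume h: "u \<in> S \<and> v \<in> S \<and> u + v = x \<and> u \<noteq> 0 \<and> v \<noteq> 0"
      obtain c1 t1 where u: "u = c1 * R + a * t1" "c1 \<noteq> 0"
        using repr[of u a b n] h by (auto simp: S_def R_def)
      obtain c2 t2 where v: "v = c2 * R + a * t2" "c2 \<noteq> 0"
        using repr[of v a b n] h by (auto simp: S_def R_def)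
      define c where "c = c1 + c2 - 1"
      define t where "t = t1 + t2"
      have c: "c \<ge> 1" using u v by (simp add: c_def)
      have "R + a * r = (Suc c) * R + a * t" using h u v xe c
        unfolding c_def t_def by (simp add: algebra_simps)
      then have e1: "a * r = c * R + a * t" by simp
      have cR: "c * R > 0" using c Rpos by simp
      have tr: "t < r" using e1 cR assms(1)
        by (metis add_cancel_left_left gr0I less_add_same_cancel2 mult_le_cancel1 not_le add_le_mono)
      have e2: "a * (r - t) = c * R" using e1 by (simp add: diff_mult_distrib2)
      have "R dvd a * (r - t)" using e2 by simp
      then have "R dvd (r - t)" using cop by (simp add: coprime_dvd_mult_right_iff)
      moreover have "0 < r - t" "r - t < R" using tr rlt by auto
      ultimately show False using nat_dvd_not_less by blast
    qed
    moreover have "x \<noteq> 0" using xe Rpos by simp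
    ultimately show ?thesis by blast
  qed
  have key: "A \<subseteq> G" if "monoid_gen G = S" for G
  proof
    fix x assume "x \<in> A"
    then have "x \<in> monoid_gen G" using AS that by auto
    then show "x \<in> G" using mg_irr[of x G] irr[OF \<open>x \<in> A\<close>] that by auto
  qed
  have minA: "minimal_system S G \<longleftrightarrow> G = A" for G
  proof
    assume m: "minimal_system S G"
    then have "monoid_gen G = S" by (simp add: minimal_system_def)
    then have "A \<subseteq> G" by (rule key)
    then show "G = A" using m genA unfolding minimal_system_def by blast
  next
    assume "G = A"
    then show "minimal_system S G" using genA key unfolding minimal_system_def by blast
  qed
  have inj: "inj_on (agen a b n) {1..n}"
  proof
    fix i j assume ij: "i \<in> {1..n}" "j \<in> {1..n}" "agen a b n i = agen a b n j"
    then have "repunit b (i - 1) = repunit b (j - 1)" using assms(1) by (simp add: agen_def)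
    then have "i - 1 = j - 1" using repunit_strict[of b "i - 1" "j - 1"] repunit_strict[of b "j - 1" "i - 1"] assms(2)
      by (metis linorder_neqE_nat less_not_refl zero_less_one less_trans)
    then show "i = j" using ij by auto
  qed
  have "embedding_dim S = card A"
    unfolding embedding_dim_def using minA by (metis the_equality)
  also have "card A = n" unfolding A_def using inj by (simp add: card_image)
  finally show ?thesis using minA unfolding S_def A_def by simp
qed

end
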